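(* Let $b>a>0$, $x\in\mathbb{R}^d$, and let $K$ be a cube containing $B(x,a)$ with $K\cap\partial B(x,b)\ne\emptyset$. Let $\mathcal{A},\mathcal{B}$ be finite subsets of $\mathbb{R}^d$ with $\mathcal{A}\subset B(x,a)$ and $\mathcal{B}\subset K\setminus B(x,a)$. If $\mathcal{B}$ contains a $K$-wall around $B(x,a)$ in $B(x,b)$, then $$|M(\mathcal{A}\cup\mathcal{B})-M(\mathcal{B})|\le c|\mathcal{A}|\,b$$ for a constant $c$ depending only on $d$. If no such wall exists, then $|M(\mathcal{A}\cup\mathcal{B})-M(\mathcal{B})|\le c|\mathcal{A}|\,\mathrm{diameter}(K)$.
   Context: For a finite set $X\subset\mathbb{R}^d$, $M(X)$ is the total length of a minimal spanning tree of the complete graph on $X$ with Euclidean edge lengths. $B(x,r)=x+[-r,r]^d$; $S(p,r)$ is the closed Euclidean ball of radius $r$ centered at $p$; $d(\cdot,\cdot)$ is Euclidean distance. Definition (wall): for $b>a>0$, $x\in\mathbb{R}^d$ and a cube $K\supset B(x,a)$ with $K\cap\partial B(x,b)\ne\emptyset$, a set $\mathfrak{W}\subset\mathbb{R}^d$ contains a $K$-wall around $B(x,a)$ in $B(x,b)$ if for every $p_1\in\partial B(x,a)$ and every $p_2\in K\cap\partial B(x,b)$ the set $K\cap\mathfrak{W}\cap S(p_1,\tfrac34 d(p_1,p_2))\cap S(p_2,\tfrac34 d(p_1,p_2))\cap(B(x,b)\setminus B(x,a))$ is nonempty. *)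

theory Defs
  imports "HOL-Analysis.Analysis"
begin

definition cg_edges :: "'a set \<Rightarrow> 'a set set" where
  "cg_edges X = {{p, q} | p q. p \<in> X \<and> q \<in> X \<and> p \<noteq> q}"

definition connects :: "'a set \<Rightarrow> 'a set set \<Rightarrow> bool" where
  "connects X E \<longleftrightarrow> (\<forall>u\<in>X. \<forall>v\<in>X. (u, v) \<in> {(p, q). {p, q} \<in> E}\<^sup>*)"

definition spanning_tree :: "'a set \<Rightarrow> 'a set set \<Rightarrow> bool" where
  "spanning_tree X E \<longleftrightarrow>
     E \<subseteq> cg_edges X \<and> connects X E \<and> (\<forall>e\<in>E. \<not> connects X (E - {e}))"

text \<open>M(X): total Euclidean length of a minimal spanning tree; the length of the
  edge {p,q} is diameter {p,q} = dist p q.\<close>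
definition MST_length :: "'a::metric_space set \<Rightarrow> real" where
  "MST_length X = Inf {(\<Sum>e\<in>E. diameter e) | E. spanning_tree X E}"

text \<open>B(x,r) = x + [-r,r]^d.\<close>
definition sqbox :: "'a::euclidean_space \<Rightarrow> real \<Rightarrow> 'a set" where
  "sqbox x r = cbox (x - r *\<^sub>R One) (x + r *\<^sub>R One)"

definition has_wall :: "'a::euclidean_space set \<Rightarrow> 'a set \<Rightarrow> 'a \<Rightarrow> real \<Rightarrow> real \<Rightarrow> bool" where
  "has_wall W K x a b \<longleftrightarrow>
     (\<forall>p1\<in>frontier (sqbox x a). \<forall>p2\<in>K \<inter> frontier (sqbox x b).
        K \<inter> W \<inter> cball p1 (3/4 * dist p1 p2) \<inter> cball p2 (3/4 * dist p1 p2)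
          \<inter> (sqbox x b - sqbox x a) \<noteq> {})"

end

theory Submission
  imports Defs
begin


definition rel :: "'a set set \<Rightarrow> ('a \<times> 'a) set" where
  "rel E = {(p, q). {p, q} \<in> E}"

definition cost :: "'a::metric_space set set \<Rightarrow> real" where
  "cost E = (\<Sum>e\<in>E. diameter e)"

definition conn :: "'a set \<Rightarrow> 'a set set \<Rightarrow> bool" where
  "conn X E \<longleftrightarrow> E \<subseteq> cg_edges X \<and> connects X E"

lemma diameter_pair: "diameter {p, q::'a::metric_space} = dist p q"
proof (rule antisym)
  show "diameter {p, q} \<le> dist p q"
    unfolding diameter_def by (simp add: dist_commute) (intro cSup_least; auto)
  show "dist p q \<le> diameter {p, q}"
    by (rule diameter_bounded_bound) auto
qed

lemma cg_edgesE: "e \<in> cg_edges X \<Longrightarrow> (\<And>p q. e = {p,q} \<Longrightarrow> p \<in> X \<Longrightarrow> q \<in> X \<Longrightarrow> p \<noteq> q \<Longrightarrow> P) \<Longrightarrow> P"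
  unfolding cg_edges_def by blast

lemma cg_edges_pair: "{p,q} \<in> cg_edges X \<Longrightarrow> p \<in> X \<and> q \<in> X \<and> p \<noteq> q"
  unfolding cg_edges_def by (auto simp: doubleton_eq_iff)

lemma finite_cg_edges: "finite X \<Longrightarrow> finite (cg_edges X)"
proof -
  assume "finite X"
  have "cg_edges X \<subseteq> (\<lambda>(p,q). {p,q}) ` (X \<times> X)" unfolding cg_edges_def by auto
  thus ?thesis using \<open>finite X\<close> by (meson finite_SigmaI finite_imageI finite_subset)
qed

lemma diameter_nonneg_edge: "e \<in> cg_edges X \<Longrightarrow> 0 \<le> diameter (e::'a::metric_space set)"
  by (erule cg_edgesE) (simp add: diameter_pair)

lemma rel_sym: "(a,b) \<in> (rel E)\<^sup>* \<Longrightarrow> (b,a) \<in> (rel E)\<^sup>*"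
proof -
  have "(rel E)\<inverse> = rel E" unfolding rel_def by (auto simp: insert_commute)
  moreover assume "(a,b) \<in> (rel E)\<^sup>*"
  hence "(b,a) \<in> ((rel E)\<inverse>)\<^sup>*" by (simp add: rtrancl_converse)
  ultimately show ?thesis by simp
qed

lemma connects_rel: "connects X E \<longleftrightarrow> (\<forall>u\<in>X. \<forall>v\<in>X. (u,v) \<in> (rel E)\<^sup>*)"
  unfolding connects_def rel_def by simp

lemma connects_from: "v \<in> X \<Longrightarrow> (\<forall>u\<in>X. (v,u) \<in> (rel E)\<^sup>*) \<Longrightarrow> connects X E"
  unfolding connects_rel by (meson rel_sym rtrancl_trans)

lemma rel_mono: "E \<subseteq> F \<Longrightarrow> (p,q) \<in> (rel E)\<^sup>* \<Longrightarrow> (p,q) \<in> (rel F)\<^sup>*"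
proof -
  assume "E \<subseteq> F" "(p,q) \<in> (rel E)\<^sup>*"
  moreover have "rel E \<subseteq> rel F" using \<open>E \<subseteq> F\<close> unfolding rel_def by auto
  ultimately show ?thesis using rtrancl_mono by blast
qed

lemma split_lemma:
  assumes "connects X E" "{v,w} \<in> E" "v \<in> X" "u \<in> X"
  shows "(v,u) \<in> (rel (E - {{v,w}}))\<^sup>* \<or> (w,u) \<in> (rel (E - {{v,w}}))\<^sup>*"
proof -
  have "(v,u) \<in> (rel E)\<^sup>*" using assms unfolding connects_rel by blast
  thus ?thesis
  proof (induction rule: rtrancl_induct)
    case base then show ?case by simp
  next
    case (step y z)
    show ?case
    proof (cases "{y,z} = {v,w}")
      case True
      hence "z = v \<or> z = w" by (auto simp: doubleton_eq_iff)
      thus ?thesis by auto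
    next
      case False
      hence "(y,z) \<in> rel (E - {{v,w}})" using step(2) unfolding rel_def by auto
      thus ?thesis using step(3) by (meson rtrancl.rtrancl_into_rtrancl)
    qed
  qed
qed

lemma reconnect:
  assumes "conn X E" "{v,w} \<in> E" "(v,q) \<in> (rel (E - {{v,w}}))\<^sup>*" "q \<in> X" "q \<noteq> w"
  shows "conn X (insert {q,w} (E - {{v,w}}))"
proof -
  let ?E = "insert {q,w} (E - {{v,w}})"
  have EX: "E \<subseteq> cg_edges X" using assms(1) by (simp add: conn_def)
  have "{v,w} \<in> cg_edges X" using EX assms(2) by (rule subsetD)
  hence vw: "v \<in> X" "w \<in> X" by (meson cg_edges_pair)+
  have "{q,w} \<in> cg_edges X" unfolding cg_edges_def using vw assms(4,5) by blast
  hence sub: "?E \<subseteq> cg_edges X" using EX by blast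
  have r: "(v,u) \<in> (rel ?E)\<^sup>*" if "u \<in> X" for u
  proof -
    have vq: "(v,q) \<in> (rel ?E)\<^sup>*" using assms(3) by (rule rel_mono[rotated]) auto
    have "(q,w) \<in> rel ?E" unfolding rel_def by auto
    hence vw': "(v,w) \<in> (rel ?E)\<^sup>*" using vq by (meson rtrancl.rtrancl_into_rtrancl)
    from split_lemma[of X E v w u] assms that vw
    consider "(v,u) \<in> (rel (E - {{v,w}}))\<^sup>*" | "(w,u) \<in> (rel (E - {{v,w}}))\<^sup>*" unfolding conn_def by blast
    thus ?thesis
    proof cases
      case 1 thus ?thesis by (rule rel_mono[rotated]) auto
    next
      case 2 hence "(w,u) \<in> (rel ?E)\<^sup>*" by (rule rel_mono[rotated]) auto
      thus ?thesis using vw' by (meson rtrancl_trans)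
    qed
  qed
  show ?thesis unfolding conn_def using sub connects_from[OF vw(1)] r by blast
qed

lemma cost_exchange:
  assumes "finite E" "e \<in> E" "f \<in> cg_edges X" "E \<subseteq> cg_edges X"
  shows "cost (insert f (E - {e})) \<le> cost E - diameter e + diameter f"
proof -
  have "cost (insert f (E - {e})) \<le> diameter f + cost (E - {e})"
    unfolding cost_def using assms by (cases "f \<in> E - {e}") (auto simp: insert_absorb diameter_nonneg_edge)
  also have "cost (E - {e}) = cost E - diameter e" unfolding cost_def using assms by (simp add: sum_diff1)
  finally show ?thesis by simp
qed

definition opt :: "'a::metric_space set \<Rightarrow> 'a set set \<Rightarrow> bool" where
  "opt X E \<longleftrightarrow> conn X E \<and> (\<forall>E'. conn X E' \<longrightarrow> cost E \<le> cost E')"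

lemma opt_conn: "opt X E \<Longrightarrow> conn X E"
  by (simp add: opt_def)

lemma opt_min: "opt X E \<Longrightarrow> conn X E' \<Longrightarrow> cost E \<le> cost E'"
  by (simp add: opt_def)

lemma conn_sub: "conn X E \<Longrightarrow> E \<subseteq> cg_edges X"
  by (simp add: conn_def)

lemma conn_edge: "conn X E \<Longrightarrow> {v,w} \<in> E \<Longrightarrow> v \<in> X \<and> w \<in> X \<and> v \<noteq> w"
  using cg_edges_pair conn_sub by (metis subsetD)

lemma conn_finite: "finite X \<Longrightarrow> conn X E \<Longrightarrow> finite E"
  using finite_subset[OF conn_sub finite_cg_edges] by metis

lemma opt_exchange1:
  assumes "finite X" "opt X E" "{v,w} \<in> E" "(v,q) \<in> (rel (E - {{v,w}}))\<^sup>*" "q \<in> X" "q \<noteq> w"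
  shows "dist v w \<le> dist q w"
proof -
  have c: "conn X E" using assms(2) by (rule opt_conn)
  have fin: "finite E" using conn_finite[OF assms(1) c] .
  have w: "w \<in> X" using conn_edge[OF c assms(3)] by simp
  have qw: "{q,w} \<in> cg_edges X" unfolding cg_edges_def using assms(5,6) w by blast
  have "cost E \<le> cost (insert {q,w} (E - {{v,w}}))"
    by (rule opt_min[OF assms(2) reconnect[OF c assms(3-6)]])
  also have "\<dots> \<le> cost E - diameter {v,w} + diameter {q,w}"
    by (rule cost_exchange[OF fin assms(3) qw conn_sub[OF c]])
  finally show ?thesis by (simp add: diameter_pair)
qed

lemma opt_exchange:
  assumes "finite X" "opt X E" "{v,w} \<in> E" "q \<in> X" "q \<noteq> v" "q \<noteq> w"
  shows "dist v w \<le> dist q w \<or> dist v w \<le> dist v q"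
proof -
  have c: "conn X E" using assms(2) by (rule opt_conn)
  have vw: "v \<in> X" "w \<in> X" using conn_edge[OF c assms(3)] by simp_all
  have cc: "connects X E" using c by (simp add: conn_def)
  from split_lemma[OF cc assms(3) vw(1) assms(4)]
  consider "(v,q) \<in> (rel (E - {{v,w}}))\<^sup>*" | "(w,q) \<in> (rel (E - {{v,w}}))\<^sup>*" by blast
  thus ?thesis
  proof cases
    case 1 thus ?thesis using opt_exchange1[OF assms(1,2,3) 1 assms(4,6)] by simp
  next
    case 2
    have e: "{w,v} = {v,w}" by (simp add: insert_commute)
    have "dist w v \<le> dist q v" using opt_exchange1[of X E w v q] assms 2 by (simp add: e)
    thus ?thesis by (simp add: dist_commute)
  qed
qed

lemma opt_nbr:
  assumes "finite X" "opt X E" "{v,w1} \<in> E" "{v,w2} \<in> E" "w1 \<noteq> w2"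
  shows "dist v w2 \<le> dist w1 w2"
proof -
  have c: "conn X E" using assms(2) by (rule opt_conn)
  have w1: "w1 \<in> X" using conn_edge[OF c assms(3)] by simp
  have "{v,w1} \<noteq> {v,w2}" using assms(5) by (auto simp: doubleton_eq_iff)
  hence "(v,w1) \<in> rel (E - {{v,w2}})" using assms(3) unfolding rel_def by auto
  thus ?thesis using opt_exchange1[OF assms(1,2,4) _ w1 assms(5)] by blast
qed

lemma tree_exists:
  assumes "finite E" "conn X E"
  shows "\<exists>E1\<subseteq>E. spanning_tree X E1"
  using assms
proof (induction E rule: finite_psubset_induct)
  case (psubset E)
  show ?case
  proof (cases "\<forall>e\<in>E. \<not> connects X (E - {e})")
    case True thus ?thesis using psubset.prems unfolding spanning_tree_def conn_def by blast
  next
    case False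
    then obtain e where e: "e \<in> E" "connects X (E - {e})" by blast
    hence "conn X (E - {e})" using psubset.prems unfolding conn_def by blast
    from psubset.IH[OF _ this] e show ?thesis by blast
  qed
qed

lemma opt_exists:
  assumes "finite X"
  shows "\<exists>E. opt X E \<and> MST_length X = cost E"
proof -
  let ?C = "{E. conn X E}"
  have fin: "finite ?C" using finite_cg_edges[OF assms]
    by (rule finite_subset[rotated, OF finite_Pow_iff[THEN iffD2]]) (auto simp: conn_def)
  have "conn X (cg_edges X)" unfolding conn_def connects_rel
  proof (intro conjI subset_refl ballI)
    fix u v assume "u \<in> X" "v \<in> X"
    show "(u,v) \<in> (rel (cg_edges X))\<^sup>*"
    proof (cases "u = v")
      case False
      hence "(u,v) \<in> rel (cg_edges X)" using \<open>u \<in> X\<close> \<open>v \<in> X\<close> unfolding rel_def cg_edges_def by blast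
      thus ?thesis by blast
    qed simp
  qed
  hence ne: "cost ` ?C \<noteq> {}" by blast
  obtain E0 where E0: "E0 \<in> ?C" "cost E0 = Min (cost ` ?C)"
    using Min_in[OF finite_imageI[OF fin] ne] by auto
  have o: "opt X E0" unfolding opt_def using E0 fin by auto
  have finE0: "finite E0" using E0 finite_cg_edges[OF assms] unfolding conn_def by (auto intro: finite_subset)
  obtain E1 where E1: "E1 \<subseteq> E0" "spanning_tree X E1" using tree_exists[OF finE0] E0 by auto
  have c1: "conn X E1" using E1 unfolding spanning_tree_def conn_def by blast
  have "cost E1 \<le> cost E0" unfolding cost_def
    by (rule sum_mono2[OF finE0 E1(1)]) (use E0 in \<open>auto simp: conn_def intro: diameter_nonneg_edge\<close>)
  hence eq: "cost E1 = cost E0" using o c1 unfolding opt_def by force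
  have "MST_length X = cost E0" unfolding MST_length_def
  proof (rule cInf_eq_minimum)
    show "cost E0 \<in> {\<Sum>e\<in>E. diameter e |E. spanning_tree X E}" using E1 eq unfolding cost_def by (metis (mono_tags, lifting) mem_Collect_eq)
  next
    fix r assume "r \<in> {\<Sum>e\<in>E. diameter e |E. spanning_tree X E}"
    then obtain E where "spanning_tree X E" "r = cost E" unfolding cost_def by auto
    thus "cost E0 \<le> r" using o unfolding opt_def spanning_tree_def conn_def by auto
  qed
  thus ?thesis using o by blast
qed

lemma mst_le: "finite X \<Longrightarrow> conn X E \<Longrightarrow> MST_length X \<le> cost E"
  using opt_exists unfolding opt_def by metis



lemma unit_sep:
  fixes a b :: "'a::real_inner"
  assumes "a \<noteq> 0" "b \<noteq> 0" "norm a \<le> norm (a - b)" "norm b \<le> norm (a - b)"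
  shows "1 \<le> norm (a /\<^sub>R norm a - b /\<^sub>R norm b)"
proof -
  define A where "A = norm a"
  define B where "B = norm b"
  have A: "A > 0" "B > 0" using assms by (auto simp: A_def B_def)
  have d: "norm (a - b)^2 = A^2 - 2 * (a \<bullet> b) + B^2"
    unfolding A_def B_def power2_norm_eq_inner by (simp add: inner_diff inner_commute algebra_simps)
  have "A^2 \<le> norm (a-b)^2" using assms(3) A_def by (simp add: power_mono)
  hence h1: "2 * (a \<bullet> b) \<le> B^2" using d by simp
  have "B^2 \<le> norm (a-b)^2" using assms(4) B_def by (simp add: power_mono)
  hence h2: "2 * (a \<bullet> b) \<le> A^2" using d by simp
  have h3: "2 * (a \<bullet> b) \<le> A * B"
  proof (cases "A \<le> B")
    case True hence "A^2 \<le> A * B" using A by (simp add: power2_eq_square)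
    thus ?thesis using h2 by linarith
  next
    case False hence "B^2 \<le> A * B" using A by (simp add: power2_eq_square)
    thus ?thesis using h1 by linarith
  qed
  have e1: "(a /\<^sub>R A) \<bullet> (a /\<^sub>R A) = 1" using A by (simp add: A_def dot_square_norm power2_eq_square)
  have e2: "(b /\<^sub>R B) \<bullet> (b /\<^sub>R B) = 1" using A by (simp add: B_def dot_square_norm power2_eq_square)
  have e3: "(a /\<^sub>R A) \<bullet> (b /\<^sub>R B) = (a \<bullet> b) / (A * B)" by (simp add: field_simps)
  have "norm (a /\<^sub>R A - b /\<^sub>R B)^2 = (a /\<^sub>R A) \<bullet> (a /\<^sub>R A) - 2 * ((a /\<^sub>R A) \<bullet> (b /\<^sub>R B)) + (b /\<^sub>R B) \<bullet> (b /\<^sub>R B)"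
    unfolding power2_norm_eq_inner by (simp add: inner_diff inner_commute)
  also have "\<dots> = 2 - 2 * (a \<bullet> b) / (A * B)" using e1 e2 e3 by simp
  also have "\<dots> \<ge> 1" using h3 A by (simp add: field_simps)
  finally have "1 \<le> norm (a /\<^sub>R A - b /\<^sub>R B)^2" .
  hence "1 \<le> norm (a /\<^sub>R A - b /\<^sub>R B)" using power2_le_imp_le[of 1 "norm (a /\<^sub>R A - b /\<^sub>R B)"] by simp
  thus ?thesis by (simp add: A_def B_def)
qed

definition Npack :: "'a::euclidean_space itself \<Rightarrow> nat" where
  "Npack _ = (4 * DIM('a) + 1) ^ DIM('a)"

lemma packing:
  fixes U :: "'a::euclidean_space set"
  assumes n: "\<And>u. u \<in> U \<Longrightarrow> norm u \<le> 1"
    and s: "\<And>u u'. u \<in> U \<Longrightarrow> u' \<in> U \<Longrightarrow> u \<noteq> u' \<Longrightarrow> 1 \<le> dist u u'"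
  shows "finite U \<and> card U \<le> Npack TYPE('a)"
proof -
  define D where "D = DIM('a)"
  have D: "D \<ge> 1" unfolding D_def by (simp add: DIM_positive Suc_leI)
  define m :: real where "m = 2 * real D"
  have m: "m > 0" using D by (simp add: m_def)
  define f where "f u = restrict (\<lambda>i. \<lfloor>(u \<bullet> i) * m\<rfloor>) Basis" for u :: 'a
  define T where "T = PiE Basis (\<lambda>_::'a. {- int (2*D) .. int (2*D)})"
  have fT: "f ` U \<subseteq> T"
  proof
    fix z assume "z \<in> f ` U"
    then obtain u where u: "u \<in> U" "z = f u" by auto
    have "\<lfloor>(u \<bullet> i) * m\<rfloor> \<in> {- int (2*D) .. int (2*D)}" if "i \<in> Basis" for i
    proof -
      have "\<bar>u \<bullet> i\<bar> \<le> 1" using n[OF u(1)] Basis_le_norm[OF that, of u] by linarith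
      hence "\<bar>(u \<bullet> i) * m\<bar> \<le> m" using m by (simp add: abs_mult)
      hence "- m \<le> (u \<bullet> i) * m" "(u \<bullet> i) * m \<le> m" by linarith+
      hence "- int (2*D) \<le> \<lfloor>(u \<bullet> i) * m\<rfloor>" "\<lfloor>(u \<bullet> i) * m\<rfloor> \<le> int (2*D)"
        unfolding m_def by (simp_all add: le_floor_iff floor_le_iff)
      thus ?thesis by simp
    qed
    thus "z \<in> T" using u unfolding T_def f_def by auto
  qed
  have inj: "inj_on f U"
  proof (rule inj_onI, rule ccontr)
    fix u u' assume uu: "u \<in> U" "u' \<in> U" "f u = f u'" "u \<noteq> u'"
    have c: "\<bar>(u - u') \<bullet> i\<bar> < 1 / m" if "i \<in> Basis" for i
    proof -
      have "\<lfloor>(u \<bullet> i) * m\<rfloor> = \<lfloor>(u' \<bullet> i) * m\<rfloor>" using uu(3) that unfolding f_def by (metis restrict_apply')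
      hence "\<bar>(u \<bullet> i) * m - (u' \<bullet> i) * m\<bar> < 1" by linarith
      moreover have "(u \<bullet> i) * m - (u' \<bullet> i) * m = ((u - u') \<bullet> i) * m" by (simp add: inner_diff_left algebra_simps)
      ultimately have "\<bar>(u - u') \<bullet> i\<bar> * m < 1" using m by (simp add: abs_mult)
      thus ?thesis using m by (simp add: field_simps)
    qed
    have "norm (u - u') \<le> (\<Sum>i\<in>Basis. \<bar>(u - u') \<bullet> i\<bar>)" by (rule norm_le_l1)
    also have "\<dots> < (\<Sum>i\<in>(Basis::'a set). 1 / m)" using c by (intro sum_strict_mono) auto
    also have "\<dots> = 1/2" using D by (simp add: m_def D_def)
    finally have "dist u u' < 1" by (simp add: dist_norm)
    thus False using s uu by fastforce
  qed
  have fin: "finite T" unfolding T_def by (simp add: finite_PiE)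
  have cT: "card T = Npack TYPE('a)" unfolding T_def Npack_def D_def
    by (simp add: card_PiE) (simp add: nat_add_distrib nat_mult_distrib)
  have "finite U" using inj fT fin by (meson finite_imageD finite_subset)
  moreover have "card U \<le> card T" by (rule card_inj_on_le[OF inj fT fin])
  ultimately show ?thesis using cT by simp
qed

lemma degree_bound:
  fixes X :: "'a::euclidean_space set"
  assumes "finite X" "opt X E"
  shows "finite {w. {v,w} \<in> E} \<and> card {w. {v,w} \<in> E} \<le> Npack TYPE('a)"
proof -
  let ?W = "{w. {v,w} \<in> E}"
  have c: "conn X E" using assms(2) by (rule opt_conn)
  have ne: "w \<noteq> v" if "w \<in> ?W" for w using that conn_edge[OF c] by auto
  define g where "g w = sgn (w - v)" for w
  have sep: "1 \<le> dist (g w1) (g w2)" if "w1 \<in> ?W" "w2 \<in> ?W" "w1 \<noteq> w2" for w1 w2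
  proof -
    have "dist v w2 \<le> dist w1 w2" "dist v w1 \<le> dist w2 w1"
      using opt_nbr[OF assms, of v w1 w2] opt_nbr[OF assms, of v w2 w1] that by auto
    hence "norm (w1 - v) \<le> norm ((w1 - v) - (w2 - v))" "norm (w2 - v) \<le> norm ((w1 - v) - (w2 - v))"
      by (simp_all add: dist_norm norm_minus_commute)
    from unit_sep[OF _ _ this] ne that show ?thesis unfolding g_def dist_norm sgn_div_norm by auto
  qed
  have inj: "inj_on g ?W"
    by (rule inj_onI, rule ccontr) (use sep in fastforce)
  have "finite (g ` ?W) \<and> card (g ` ?W) \<le> Npack TYPE('a)"
  proof (rule packing)
    fix u assume "u \<in> g ` ?W" thus "norm u \<le> 1" unfolding g_def using ne by (auto simp: norm_sgn)
  next
    fix u u' assume "u \<in> g ` ?W" "u' \<in> g ` ?W" "u \<noteq> u'"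
    thus "1 \<le> dist u u'" using sep by auto
  qed
  thus ?thesis using inj by (metis card_image finite_image_iff)
qed



lemma connectsD:
  assumes "connects X E" "u \<in> X" "v \<in> X" shows "(u,v) \<in> (rel E)\<^sup>*"
proof -
  have "\<forall>u\<in>X. \<forall>v\<in>X. (u,v) \<in> (rel E)\<^sup>*" using assms(1) by (simp only: connects_rel)
  thus ?thesis using assms(2,3) by blast
qed

lemma cost_nonneg: "conn X E \<Longrightarrow> 0 \<le> cost E"
  unfolding cost_def by (rule sum_nonneg) (use conn_sub diameter_nonneg_edge in blast)

lemma mst_nonneg: "finite X \<Longrightarrow> 0 \<le> MST_length X"
  using opt_exists cost_nonneg opt_conn by metis

lemma cost_Un_le:
  assumes "finite E" "finite F" "\<And>e. e \<in> E \<union> F \<Longrightarrow> 0 \<le> diameter e"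
  shows "cost (E \<union> F) \<le> cost E + cost F"
proof -
  have "cost (E \<union> F) = cost E + cost F - cost (E \<inter> F)"
    unfolding cost_def using assms(1,2) by (simp add: sum_Un)
  moreover have "0 \<le> cost (E \<inter> F)" unfolding cost_def by (rule sum_nonneg) (use assms(3) in blast)
  ultimately show ?thesis by simp
qed

lemma cost_star:
  assumes "finite S" "\<And>w. w \<in> S \<Longrightarrow> dist w b0 \<le> L"
  shows "cost ((\<lambda>w. {w, b0}) ` S) \<le> real (card S) * L"
proof -
  have "cost ((\<lambda>w. {w, b0}) ` S) \<le> (\<Sum>w\<in>S. diameter {w, b0})"
    unfolding cost_def using sum_image_le[OF assms(1), of diameter "\<lambda>w. {w, b0}"]
    by (simp add: diameter_pair o_def)
  also have "\<dots> \<le> (\<Sum>w\<in>S. L)" by (rule sum_mono) (use assms(2) in \<open>simp add: diameter_pair\<close>)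
  finally show ?thesis by simp
qed

lemma cg_edges_mono: "X \<subseteq> Y \<Longrightarrow> cg_edges X \<subseteq> cg_edges Y"
  unfolding cg_edges_def by blast

lemma upper:
  fixes A B :: "'a::metric_space set"
  assumes "finite A" "finite B" "A \<inter> B = {}" "b0 \<in> B" "\<And>a. a \<in> A \<Longrightarrow> dist a b0 \<le> L"
  shows "MST_length (A \<union> B) \<le> MST_length B + real (card A) * L"
proof -
  obtain E where E: "opt B E" "MST_length B = cost E" using opt_exists[OF assms(2)] by blast
  have c: "conn B E" using E(1) by (rule opt_conn)
  let ?G = "(\<lambda>a. {a, b0}) ` A"
  have finE: "finite E" by (rule conn_finite[OF assms(2) c])
  have Gsub: "?G \<subseteq> cg_edges (A \<union> B)" unfolding cg_edges_def using assms(3,4) by blast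
  have Esub: "E \<subseteq> cg_edges (A \<union> B)" using conn_sub[OF c] cg_edges_mono[of B "A \<union> B"] by blast
  have cc: "conn (A \<union> B) (E \<union> ?G)" unfolding conn_def
  proof
    show "E \<union> ?G \<subseteq> cg_edges (A \<union> B)" using Gsub Esub by blast
    show "connects (A \<union> B) (E \<union> ?G)"
    proof (rule connects_from[of b0])
      show "b0 \<in> A \<union> B" using assms(4) by blast
      show "\<forall>u\<in>A \<union> B. (b0, u) \<in> (rel (E \<union> ?G))\<^sup>*"
      proof
        fix u assume "u \<in> A \<union> B"
        then consider "u \<in> B" | "u \<in> A" by blast
        thus "(b0, u) \<in> (rel (E \<union> ?G))\<^sup>*"
        proof cases
          case 1
          have cE: "connects B E" using c by (simp add: conn_def)
          have "(b0, u) \<in> (rel E)\<^sup>*" by (rule connectsD[OF cE assms(4) 1])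
          thus ?thesis by (rule rel_mono[rotated]) blast
        next
          case 2
          have "{b0, u} \<in> ?G" using 2 by (auto simp: insert_commute)
          hence "(b0, u) \<in> rel (E \<union> ?G)" unfolding rel_def by blast
          thus ?thesis by blast
        qed
      qed
    qed
  qed
  have "MST_length (A \<union> B) \<le> cost (E \<union> ?G)" by (rule mst_le[OF _ cc]) (use assms in simp)
  also have "\<dots> \<le> cost E + cost ?G"
    by (rule cost_Un_le) (use finE assms(1) Gsub Esub diameter_nonneg_edge in blast)+
  also have "cost ?G \<le> real (card A) * L" by (rule cost_star[OF assms(1,5)])
  finally show ?thesis using E(2) by simp
qed

lemma lower:
  fixes A B :: "'a::euclidean_space set"
  assumes "finite A" "finite B" "A \<inter> B = {}" "b0 \<in> B" "opt (A \<union> B) E" "0 \<le> L"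
    and W: "\<And>w a. w \<in> B \<Longrightarrow> a \<in> A \<Longrightarrow> {a, w} \<in> E \<Longrightarrow> dist w b0 \<le> L"
  shows "MST_length B \<le> cost E + real (card A) * real (Npack TYPE('a)) * L"
proof -
  let ?X = "A \<union> B"
  have finX: "finite ?X" using assms by simp
  have c: "conn ?X E" using assms(5) by (rule opt_conn)
  have finE: "finite E" by (rule conn_finite[OF finX c])
  define F where "F = {e \<in> E. e \<subseteq> B}"
  define Wb where "Wb = {w \<in> B. \<exists>a\<in>A. {a, w} \<in> E}"
  define G where "G = (\<lambda>w. {w, b0}) ` (Wb - {b0})"
  have WU: "Wb \<subseteq> (\<Union>a\<in>A. {w. {a, w} \<in> E})" unfolding Wb_def by blast
  have dg: "finite {w. {a, w} \<in> E} \<and> card {w. {a, w} \<in> E} \<le> Npack TYPE('a)" for a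
    by (rule degree_bound[OF finX assms(5)])
  have finU: "finite (\<Union>a\<in>A. {w. {a, w} \<in> E})" using assms(1) dg by blast
  have "card (\<Union>a\<in>A. {w. {a, w} \<in> E}) \<le> (\<Sum>a\<in>A. card {w. {a, w} \<in> E})"
    by (rule card_UN_le[OF assms(1)])
  also have "\<dots> \<le> (\<Sum>a\<in>A. Npack TYPE('a))" by (rule sum_mono) (use dg in blast)
  finally have "card Wb \<le> card A * Npack TYPE('a)"
    using card_mono[OF finU WU] by simp
  hence cW: "real (card Wb) \<le> real (card A) * real (Npack TYPE('a))"
    by (metis of_nat_le_iff of_nat_mult)
  have finW: "finite Wb" using finite_subset[OF WU finU] .
  have Fsub: "F \<subseteq> cg_edges B"
  proof
    fix e assume "e \<in> F"
    hence e: "e \<in> E" "e \<subseteq> B" unfolding F_def by auto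
    then obtain p q where "e = {p,q}" "p \<noteq> q" using conn_sub[OF c] cg_edgesE by blast
    thus "e \<in> cg_edges B" using e unfolding cg_edges_def by blast
  qed
  have Gsub: "G \<subseteq> cg_edges B" unfolding G_def cg_edges_def Wb_def using assms(4) by blast
  have conn': "conn B (F \<union> G)" unfolding conn_def
  proof
    show "F \<union> G \<subseteq> cg_edges B" using Fsub Gsub by blast
    show "connects B (F \<union> G)"
    proof (rule connects_from[OF assms(4)], rule ballI)
      fix u assume u: "u \<in> B"
      have cE: "connects ?X E" using c by (simp add: conn_def)
      have uX: "u \<in> ?X" using u by (rule UnI2)
      have bX: "b0 \<in> ?X" using assms(4) by (rule UnI2)
      have p: "(u, b0) \<in> (rel E)\<^sup>*" by (rule connectsD[OF cE uX bX])
      have "(b0 \<in> B \<and> (u, b0) \<in> (rel F)\<^sup>*) \<or> (\<exists>w\<in>Wb. (u, w) \<in> (rel F)\<^sup>*)"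
        using p
      proof (induction rule: rtrancl_induct)
        case base thus ?case using u by blast
      next
        case (step y z)
        have yz: "{y, z} \<in> E" using step(2) unfolding rel_def by blast
        have zX: "z \<in> ?X" using conn_edge[OF c yz] by blast
        from step(3) show ?case
        proof
          assume h: "y \<in> B \<and> (u, y) \<in> (rel F)\<^sup>*"
          show ?case
          proof (cases "z \<in> B")
            case True
            hence "(y, z) \<in> rel F" using yz h unfolding rel_def F_def by blast
            thus ?thesis using h True by (meson rtrancl.rtrancl_into_rtrancl)
          next
            case False
            hence "z \<in> A" using zX by blast
            moreover have "{z, y} \<in> E" using yz by (simp add: insert_commute)
            ultimately have "y \<in> Wb" using h unfolding Wb_def by blast
            thus ?thesis using h by blast
          qed
        qed blast
      qed
      hence "(u, b0) \<in> (rel F)\<^sup>* \<or> (\<exists>w\<in>Wb. (u, w) \<in> (rel F)\<^sup>*)" by blast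
      hence "(u, b0) \<in> (rel (F \<union> G))\<^sup>*"
      proof
        assume "(u, b0) \<in> (rel F)\<^sup>*" thus ?thesis by (rule rel_mono[rotated]) blast
      next
        assume "\<exists>w\<in>Wb. (u, w) \<in> (rel F)\<^sup>*"
        then obtain w where w: "w \<in> Wb" "(u, w) \<in> (rel F)\<^sup>*" by blast
        have uw: "(u, w) \<in> (rel (F \<union> G))\<^sup>*" using w(2) by (rule rel_mono[rotated]) blast
        show ?thesis
        proof (cases "w = b0")
          case True thus ?thesis using uw by simp
        next
          case False
          hence "{w, b0} \<in> G" using w(1) unfolding G_def by blast
          hence "(w, b0) \<in> rel (F \<union> G)" unfolding rel_def by blast
          thus ?thesis using uw by (meson rtrancl.rtrancl_into_rtrancl)
        qed
      qed
      thus "(b0, u) \<in> (rel (F \<union> G))\<^sup>*" by (rule rel_sym)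
    qed
  qed
  have finF: "finite F" using finE unfolding F_def by simp
  have finG: "finite G" using finW unfolding G_def by simp
  have "MST_length B \<le> cost (F \<union> G)" by (rule mst_le[OF assms(2) conn'])
  also have "\<dots> \<le> cost F + cost G"
    by (rule cost_Un_le[OF finF finG]) (use Fsub Gsub diameter_nonneg_edge in blast)
  also have "cost F \<le> cost E" unfolding cost_def
    by (rule sum_mono2[OF finE]) (use conn_sub[OF c] diameter_nonneg_edge in \<open>auto simp: F_def\<close>)
  also have "cost G \<le> real (card (Wb - {b0})) * L" unfolding G_def
    by (rule cost_star) (use finW W in \<open>auto simp: Wb_def\<close>)
  also have "\<dots> \<le> real (card Wb) * L"
    by (rule mult_right_mono[OF _ assms(6)]) (simp add: card_Diff1_le finW)
  also have "\<dots> \<le> real (card A) * real (Npack TYPE('a)) * L"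
    by (rule mult_right_mono[OF cW assms(6)])
  finally show ?thesis by simp
qed



lemma One_Basis: "i \<in> (Basis::'a::euclidean_space set) \<Longrightarrow> One \<bullet> i = (1::real)"
  by (simp add: inner_sum_left inner_Basis)

lemma sqbox_mem: "p \<in> sqbox x r \<longleftrightarrow> (\<forall>i\<in>Basis. \<bar>p \<bullet> i - x \<bullet> i\<bar> \<le> r)"
  unfolding sqbox_def mem_box by (auto simp: inner_diff_left inner_add_left One_Basis abs_le_iff)

lemma sqbox_int: "p \<in> interior (sqbox x r) \<longleftrightarrow> (\<forall>i\<in>Basis. \<bar>p \<bullet> i - x \<bullet> i\<bar> < r)"
  unfolding sqbox_def interior_cbox mem_box by (auto simp: inner_diff_left inner_add_left One_Basis abs_less_iff)

lemma sqbox_dist: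
  fixes p q x :: "'a::euclidean_space"
  assumes "p \<in> sqbox x r" "q \<in> sqbox x r"
  shows "dist p q \<le> 2 * r * real DIM('a)"
proof -
  have "\<bar>(p - q) \<bullet> i\<bar> \<le> 2 * r" if "i \<in> Basis" for i
    using assms that unfolding sqbox_mem by (fastforce simp: inner_diff_left abs_le_iff)
  hence "(\<Sum>i\<in>Basis. \<bar>(p - q) \<bullet> i\<bar>) \<le> (\<Sum>i\<in>(Basis::'a set). 2 * r)" by (intro sum_mono) auto
  moreover have "dist p q \<le> (\<Sum>i\<in>Basis. \<bar>(p - q) \<bullet> i\<bar>)" unfolding dist_norm by (rule norm_le_l1)
  ultimately show ?thesis by (simp add: algebra_simps)
qed

lemma sqbox_sub_int: "a < b \<Longrightarrow> sqbox x a \<subseteq> interior (sqbox x b)"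
  unfolding sqbox_mem sqbox_int subset_iff by force

lemma sqbox_mono: "a \<le> b \<Longrightarrow> sqbox x a \<subseteq> sqbox x b"
  unfolding sqbox_mem subset_iff by force

lemma closed_sqbox: "closed (sqbox x r)" unfolding sqbox_def by (rule closed_cbox)
lemma convex_sqbox: "convex (sqbox x r)" unfolding sqbox_def by (rule convex_box(1))
lemma bounded_sqbox: "bounded (sqbox x r)" unfolding sqbox_def by (rule bounded_cbox)

lemma wall_nbr:
  fixes A B K :: "'a::euclidean_space set"
  assumes fin: "finite A" "finite B" and disj: "A \<inter> B = {}" and o: "opt (A \<union> B) E"
    and wall: "has_wall B K x a b" and AS: "A \<subseteq> sqbox x a" and BK: "B \<subseteq> K" and cK: "convex K"
    and SK: "sqbox x a \<subseteq> K" and ab: "0 < a" "a < b"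
    and v: "v \<in> A" and w: "w \<in> B" and e: "{v, w} \<in> E"
  shows "w \<in> sqbox x b"
proof (rule ccontr)
  assume wn: "w \<notin> sqbox x b"
  have vS: "v \<in> sqbox x a" using v AS by blast
  have Sab: "sqbox x a \<subseteq> sqbox x b" using ab by (intro sqbox_mono) simp
  have wnA: "w \<notin> sqbox x a" using wn Sab by blast
  have "closed_segment v w \<inter> frontier (sqbox x a) \<noteq> {}"
    by (rule connected_Int_frontier) (use vS wnA in auto)
  then obtain p1 where p1: "p1 \<in> closed_segment v w" "p1 \<in> frontier (sqbox x a)" by blast
  have p1S: "p1 \<in> sqbox x a" using p1(2) frontier_subset_closed[OF closed_sqbox] by blast
  have "closed_segment p1 w \<inter> frontier (sqbox x b) \<noteq> {}"
    by (rule connected_Int_frontier) (use p1S Sab wn in auto)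
  then obtain p2 where p2: "p2 \<in> closed_segment p1 w" "p2 \<in> frontier (sqbox x b)" by blast
  have wK: "w \<in> K" using w BK by blast
  have p1K: "p1 \<in> K" using p1S SK by blast
  have p2K: "p2 \<in> K" using closed_segment_subset[OF p1K wK cK] p2(1) by blast
  have p2ni: "p2 \<notin> interior (sqbox x b)" using p2(2) unfolding frontier_def by blast
  have "p1 \<in> interior (sqbox x b)" using p1S sqbox_sub_int[OF ab(2)] by blast
  hence ne: "p1 \<noteq> p2" using p2ni by blast
  define d where "d = dist p1 p2"
  have dpos: "d > 0" using ne unfolding d_def by simp
  have d1: "dist v w = dist v p1 + dist p1 w" using p1(1) by (simp add: between_mem_segment[symmetric] between)
  have d2: "dist p1 w = dist p1 p2 + dist p2 w" using p2(1) by (simp add: between_mem_segment[symmetric] between)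
  have "K \<inter> B \<inter> cball p1 (3/4 * dist p1 p2) \<inter> cball p2 (3/4 * dist p1 p2) \<inter> (sqbox x b - sqbox x a) \<noteq> {}"
    using wall p1(2) p2K p2(2) unfolding has_wall_def by blast
  then obtain q where q: "q \<in> B" "dist p1 q \<le> 3/4 * d" "dist p2 q \<le> 3/4 * d" unfolding d_def by auto
  have qw: "dist q w < dist v w"
  proof -
    have "dist q w \<le> dist q p2 + dist p2 w" by (rule dist_triangle)
    also have "\<dots> < d + dist p2 w" using q(3) dpos by (simp add: dist_commute)
    finally show ?thesis using d1 d2 d_def by (smt (verit) zero_le_dist)
  qed
  have vq: "dist v q < dist v w"
  proof -
    have "dist v q \<le> dist v p1 + dist p1 q" by (rule dist_triangle)
    also have "\<dots> < dist v p1 + d" using q(2) dpos by simp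
    finally show ?thesis using d1 d2 d_def by (smt (verit) zero_le_dist)
  qed
  have qv: "q \<noteq> v" using q(1) v disj by blast
  have qw': "q \<noteq> w" using vq by auto
  have "dist v w \<le> dist q w \<or> dist v w \<le> dist v q"
    by (rule opt_exchange[OF _ o e _ qv qw']) (use fin q(1) in auto)
  thus False using qw vq by linarith
qed



lemma mst_le0:
  fixes X :: "'a::metric_space set"
  assumes "finite X" "\<And>u v. u \<in> X \<Longrightarrow> v \<in> X \<Longrightarrow> u = v"
  shows "MST_length X = 0"
proof -
  have "conn X ({}::'a set set)" unfolding conn_def connects_rel using assms(2) by auto
  hence "MST_length X \<le> cost ({}::'a set set)" by (rule mst_le[OF assms(1)])
  thus ?thesis using mst_nonneg[OF assms(1)] by (simp add: cost_def)
qed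

lemma key:
  fixes A B :: "'a::euclidean_space set"
  assumes "finite A" "finite B" "A \<inter> B = {}" "b0 \<in> B" "0 \<le> L"
    and "\<And>a. a \<in> A \<Longrightarrow> dist a b0 \<le> L"
    and "\<And>E w a. opt (A \<union> B) E \<Longrightarrow> w \<in> B \<Longrightarrow> a \<in> A \<Longrightarrow> {a, w} \<in> E \<Longrightarrow> dist w b0 \<le> L"
  shows "\<bar>MST_length (A \<union> B) - MST_length B\<bar> \<le> real (card A) * (real (Npack TYPE('a)) + 1) * L"
proof -
  obtain E where E: "opt (A \<union> B) E" "MST_length (A \<union> B) = cost E" using opt_exists[of "A \<union> B"] assms(1,2) by auto
  have u: "MST_length (A \<union> B) \<le> MST_length B + real (card A) * L" by (rule upper[OF assms(1-4,6)])
  have l: "MST_length B \<le> cost E + real (card A) * real (Npack TYPE('a)) * L"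
    by (rule lower[OF assms(1-4) E(1) assms(5)]) (rule assms(7)[OF E(1)])
  have "0 \<le> real (card A) * L" using assms(5) by simp
  moreover have "0 \<le> real (card A) * real (Npack TYPE('a)) * L" using assms(5) by simp
  ultimately show ?thesis using u l E(2) by (simp add: algebra_simps abs_le_iff)
qed

lemma onlyA:
  fixes A :: "'a::euclidean_space set"
  assumes "finite A" "0 \<le> L" "\<And>p q. p \<in> A \<Longrightarrow> q \<in> A \<Longrightarrow> dist p q \<le> L"
  shows "MST_length A \<le> real (card A) * L"
proof (cases "A = {}")
  case True thus ?thesis using mst_le0[of A] by simp
next
  case False
  then obtain a0 where a0: "a0 \<in> A" by blast
  have "MST_length ((A - {a0}) \<union> {a0}) \<le> MST_length {a0} + real (card (A - {a0})) * L"
    by (rule upper) (use assms a0 in auto)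
  moreover have "MST_length {a0} = 0" by (rule mst_le0) auto
  moreover have "(A - {a0}) \<union> {a0} = A" using a0 by blast
  moreover have "real (card (A - {a0})) * L \<le> real (card A) * L"
    using assms(1,2) by (intro mult_right_mono) (simp_all add: card_Diff1_le)
  ultimately show ?thesis by simp
qed

theorem lemma7p5:
  "\<exists>c::real. \<forall>(a::real) b (x::'a::euclidean_space) K y s (A::'a set) B.
     0 < a \<and> a < b \<and> K = sqbox y s \<and> sqbox x a \<subseteq> K \<and> K \<inter> frontier (sqbox x b) \<noteq> {}
     \<and> finite A \<and> finite B \<and> A \<subseteq> sqbox x a \<and> B \<subseteq> K - sqbox x a \<longrightarrow>
       (has_wall B K x a b \<longrightarrow> \<bar>MST_length (A \<union> B) - MST_length B\<bar> \<le> c * real (card A) * b)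
     \<and> (\<not> has_wall B K x a b \<longrightarrow> \<bar>MST_length (A \<union> B) - MST_length B\<bar> \<le> c * real (card A) * diameter K)"
proof -
  define N where "N = real (Npack TYPE('a))"
  define c where "c = 2 * real DIM('a) * (N + 1)"
  have D1: "1 \<le> real DIM('a)" using DIM_positive[where 'a='a] by linarith
  have N0: "0 \<le> N" unfolding N_def by simp
  have cge: "N + 1 \<le> c" unfolding c_def using D1 N0
    by (smt (verit, best) mult_le_cancel_right1)
  show ?thesis
  proof (rule exI[of _ c], intro allI impI)
    fix a b :: real and x :: 'a and K y s and A B :: "'a set"
    assume H: "0 < a \<and> a < b \<and> K = sqbox y s \<and> sqbox x a \<subseteq> K \<and> K \<inter> frontier (sqbox x b) \<noteq> {}
     \<and> finite A \<and> finite B \<and> A \<subseteq> sqbox x a \<and> B \<subseteq> K - sqbox x a"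
    hence ab: "0 < a" "a < b" and Kd: "K = sqbox y s" and SK: "sqbox x a \<subseteq> K"
      and KF: "K \<inter> frontier (sqbox x b) \<noteq> {}" and fin: "finite A" "finite B"
      and AS: "A \<subseteq> sqbox x a" and BK: "B \<subseteq> K - sqbox x a" by auto
    have disj: "A \<inter> B = {}" using AS BK by blast
    have AK: "A \<subseteq> K" using AS SK by blast
    have BK': "B \<subseteq> K" using BK by blast
    have bK: "bounded K" using Kd bounded_sqbox by simp
    have cK: "convex K" using Kd convex_sqbox by simp
    have dK: "dist p q \<le> diameter K" if "p \<in> K" "q \<in> K" for p q
      by (rule diameter_bounded_bound[OF bK that])
    have xS: "x \<in> sqbox x a" using ab unfolding sqbox_mem by simp
    have xK: "x \<in> K" using SK xS by blast
    have dK0: "0 \<le> diameter K" using dK[OF xK xK] by simp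
    show "(has_wall B K x a b \<longrightarrow> \<bar>MST_length (A \<union> B) - MST_length B\<bar> \<le> c * real (card A) * b)
     \<and> (\<not> has_wall B K x a b \<longrightarrow> \<bar>MST_length (A \<union> B) - MST_length B\<bar> \<le> c * real (card A) * diameter K)"
    proof (intro conjI impI)
      assume wall: "has_wall B K x a b"
      have "frontier (sqbox x a) \<noteq> {}"
      proof -
        note xS
        moreover have "sqbox x a \<noteq> UNIV" using bounded_sqbox[of x a] not_bounded_UNIV by metis
        ultimately show ?thesis unfolding frontier_eq_empty by blast
      qed
      then obtain p1 where p1: "p1 \<in> frontier (sqbox x a)" by blast
      obtain p2 where p2: "p2 \<in> K \<inter> frontier (sqbox x b)" using KF by blast
      have "K \<inter> B \<inter> cball p1 (3/4 * dist p1 p2) \<inter> cball p2 (3/4 * dist p1 p2) \<inter> (sqbox x b - sqbox x a) \<noteq> {}"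
        using wall p1 p2 unfolding has_wall_def by blast
      then obtain b0 where b0: "b0 \<in> B" "b0 \<in> sqbox x b" by blast
      define L where "L = 2 * b * real DIM('a)"
      have L0: "0 \<le> L" unfolding L_def using ab by simp
      have Sab: "sqbox x a \<subseteq> sqbox x b" using ab by (intro sqbox_mono) simp
      have "\<bar>MST_length (A \<union> B) - MST_length B\<bar> \<le> real (card A) * (N + 1) * L"
        unfolding N_def
      proof (rule key[OF fin disj b0(1) L0])
        fix p assume "p \<in> A"
        hence "p \<in> sqbox x b" using AS Sab by blast
        thus "dist p b0 \<le> L" unfolding L_def by (rule sqbox_dist[OF _ b0(2)])
      next
        fix E w p assume "opt (A \<union> B) E" "w \<in> B" "p \<in> A" "{p, w} \<in> E"
        hence "w \<in> sqbox x b"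
          by (intro wall_nbr[OF fin disj _ wall AS BK' cK SK ab]) auto
        thus "dist w b0 \<le> L" unfolding L_def by (rule sqbox_dist[OF _ b0(2)])
      qed
      also have "\<dots> = real (card A) * (N + 1) * 2 * real DIM('a) * b" unfolding L_def by simp
      also have "\<dots> = c * real (card A) * b" unfolding c_def by simp
      finally show "\<bar>MST_length (A \<union> B) - MST_length B\<bar> \<le> c * real (card A) * b" .
    next
      assume nw: "\<not> has_wall B K x a b"
      have pos: "0 \<le> real (card A) * diameter K" using dK0 by simp
      have "\<bar>MST_length (A \<union> B) - MST_length B\<bar> \<le> real (card A) * (N + 1) * diameter K"
      proof (cases "B = {}")
        case True
        have "MST_length B = 0" using True by (intro mst_le0) auto
        moreover have "MST_length A \<le> real (card A) * diameter K"
          by (rule onlyA[OF fin(1) dK0]) (use AK dK in blast)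
        moreover have "0 \<le> MST_length A" by (rule mst_nonneg[OF fin(1)])
        ultimately have "\<bar>MST_length (A \<union> B) - MST_length B\<bar> \<le> real (card A) * diameter K"
          using True by simp
        also have "\<dots> \<le> real (card A) * (N + 1) * diameter K"
          using pos N0 by (simp add: mult_le_cancel_right1 algebra_simps)
        finally show ?thesis .
      next
        case False
        then obtain b0 where b0: "b0 \<in> B" by blast
        show ?thesis unfolding N_def
        proof (rule key[OF fin disj b0 dK0])
          fix p assume "p \<in> A" thus "dist p b0 \<le> diameter K" using AK BK' b0 dK by blast
        next
          fix E w p assume "w \<in> B" thus "dist w b0 \<le> diameter K" using BK' b0 dK by blast
        qed
      qed
      also have "\<dots> \<le> c * real (card A) * diameter K"
      proof -
        have "real (card A) * (N + 1) * diameter K = (N + 1) * (real (card A) * diameter K)" by simp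
        also have "\<dots> \<le> c * (real (card A) * diameter K)" by (rule mult_right_mono[OF cge pos])
        finally show ?thesis by simp
      qed
      finally show "\<bar>MST_length (A \<union> B) - MST_length B\<bar> \<le> c * real (card A) * diameter K" .
    qed
  qed
qed


end
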